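(* Let $n\ge2$ and let $\Omega\subset\mathbb{R}^n$ be a bounded connected open set of class $C^2$. Then $$\varphi(y)\,H(y)\le \frac1n\qquad\text{for every } y\in\partial\Omega.$$
   Context: $\nu(y)$ denotes the outward unit normal to $\partial\Omega$ at $y$. $\kappa_1(y),\dots,\kappa_{n-1}(y)$ are the principal curvatures of $\partial\Omega$ at $y$, i.e. the eigenvalues of the differential of the Gauss map $\nu$ at $y$ (a ball of radius $r$ has all principal curvatures equal to $1/r$), and $H(y)=\frac{\kappa_1(y)+\cdots+\kappa_{n-1}(y)}{n-1}$. $d_\Omega(x)=\min_{z\in\partial\Omega}|x-z|$. The cut value of $y\in\partial\Omega$ is $\lambda(y)=\sup\{t\ge0:\ d_\Omega(y-t\nu(y))=t\}$. The function $\varphi$ is $\varphi(y)=\int_0^{\lambda(y)}\prod_{j=1}^{n-1}[1-t\kappa_j(y)]\,dt$. *)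

theory Defs
  imports "HOL-Analysis.Analysis"
begin

definition C2_defining ::
  "(real^'n) set \<Rightarrow> real^'n \<Rightarrow> (real^'n) set \<Rightarrow> (real^'n \<Rightarrow> real) \<Rightarrow> (real^'n \<Rightarrow> real^'n) \<Rightarrow> bool"
where
  "C2_defining \<Omega> y U \<rho> g \<longleftrightarrow>
     open U \<and> y \<in> U \<and>
     (\<forall>x\<in>U. (\<rho> has_derivative (\<lambda>h. g x \<bullet> h)) (at x)) \<and>
     (\<exists>D :: (real^'n) \<Rightarrow> ((real^'n) \<Rightarrow>\<^sub>L (real^'n)).
        (\<forall>x\<in>U. (g has_derivative blinfun_apply (D x)) (at x)) \<and> continuous_on U D) \<and>
     (\<forall>x\<in>U. g x \<noteq> 0) \<and>
     \<Omega> \<inter> U = {x\<in>U. \<rho> x < 0}"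

definition C2_boundary :: "(real^'n) set \<Rightarrow> bool" where
  "C2_boundary \<Omega> \<longleftrightarrow> open \<Omega> \<and>
     (\<forall>y\<in>frontier \<Omega>. \<exists>U \<rho> g. C2_defining \<Omega> y U \<rho> g)"

text \<open>Outward unit normal (independent of the chosen defining function).\<close>
definition outer_normal :: "(real^'n) set \<Rightarrow> real^'n \<Rightarrow> real^'n" where
  "outer_normal \<Omega> y =
     (SOME v. \<exists>U \<rho> g. C2_defining \<Omega> y U \<rho> g \<and> v = (1 / norm (g y)) *\<^sub>R g y)"

definition tangent_proj :: "(real^'n) set \<Rightarrow> real^'n \<Rightarrow> real^'n \<Rightarrow> real^'n" where
  "tangent_proj \<Omega> y v = v - (v \<bullet> outer_normal \<Omega> y) *\<^sub>R outer_normal \<Omega> y"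

text \<open>kappa 0, ..., kappa (n-2) are the principal curvatures at y, listed with
  (algebraic) multiplicity: they are the eigenvalues of the differential L of the
  Gauss map restricted to the tangent space T_y.  Extending L|T_y by 0 on the normal
  direction gives the map L o P (P the projection onto T_y), whose characteristic
  polynomial is s * prod_j (s - kappa j).\<close>
definition principal_curvatures ::
  "(real^'n) set \<Rightarrow> real^'n \<Rightarrow> (nat \<Rightarrow> real) \<Rightarrow> bool" where
  "principal_curvatures \<Omega> y \<kappa> \<longleftrightarrow>
     (\<exists>L. (outer_normal \<Omega> has_derivative L) (at y within frontier \<Omega>) \<and>
        (\<forall>s::real. det (s *\<^sub>R mat 1 - matrix (L \<circ> tangent_proj \<Omega> y))
                     = s * (\<Prod>j<CARD('n) - 1. (s - \<kappa> j))))"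

definition mean_curv :: "(real^'n) set \<Rightarrow> (nat \<Rightarrow> real) \<Rightarrow> real" where
  "mean_curv \<Omega> \<kappa> = (\<Sum>j<CARD('n) - 1. \<kappa> j) / real (CARD('n) - 1)"

definition dist_bd :: "(real^'n) set \<Rightarrow> real^'n \<Rightarrow> real" where
  "dist_bd \<Omega> x = infdist x (frontier \<Omega>)"

definition cut_value :: "(real^'n) set \<Rightarrow> real^'n \<Rightarrow> real" where
  "cut_value \<Omega> y = Sup {t. t \<ge> 0 \<and> dist_bd \<Omega> (y - t *\<^sub>R outer_normal \<Omega> y) = t}"

definition phi_fun :: "(real^'n) set \<Rightarrow> real^'n \<Rightarrow> (nat \<Rightarrow> real) \<Rightarrow> real" where
  "phi_fun \<Omega> y \<kappa> =
     integral {0..cut_value \<Omega> y} (\<lambda>t. \<Prod>j<CARD('n) - 1. (1 - t * \<kappa> j))"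

end

theory Submission
  imports Defs
begin


lemma small_pos:
  fixes a b c d :: real
  assumes "a > 0" "b > 0" "c \<ge> 0" "d > 0"
  shows "\<exists>s>0. s < a \<and> s < b \<and> s * c < d"
proof -
  define s where "s = min a (min b (d / (c + 1))) / 2"
  have c1: "c + 1 > 0" using assms by linarith
  have dc: "d / (c+1) > 0" using assms c1 by simp
  have s0: "s > 0" using assms dc by (simp add: s_def)
  have "min a (min b (d / (c + 1))) \<le> d / (c+1)" by simp
  hence "s \<le> d / (c+1) / 2" unfolding s_def by (simp only: divide_right_mono)
  hence "s * (c+1) \<le> d / 2" using c1 by (simp add: field_simps)
  hence "s * c < d" using s0 assms by (simp add: algebra_simps)
  moreover have "s < a" "s < b" using assms s0 by (auto simp: s_def)
  ultimately show ?thesis using s0 by blast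
qed

lemma chain_real:
  fixes \<rho> :: "'a::real_inner \<Rightarrow> real"
  assumes z: "(z has_vector_derivative z') (at s)"
    and r: "(\<rho> has_derivative (\<lambda>h. G \<bullet> h)) (at (z s))"
  shows "((\<lambda>s. \<rho> (z s)) has_real_derivative (G \<bullet> z')) (at s)"
proof -
  have "((\<rho> \<circ> z) has_derivative ((\<lambda>h. G \<bullet> h) \<circ> (\<lambda>x. x *\<^sub>R z'))) (at s)"
    using z r unfolding has_vector_derivative_def by (rule diff_chain_at)
  moreover have "((\<lambda>h. G \<bullet> h) \<circ> (\<lambda>x. x *\<^sub>R z')) = (*) (G \<bullet> z')"
    by (auto simp: fun_eq_iff mult.commute)
  ultimately show ?thesis unfolding has_field_derivative_def
    by (simp add: comp_def)
qed

lemma line_deriv: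
  fixes \<rho> :: "'a::real_inner \<Rightarrow> real"
  assumes r: "(\<rho> has_derivative (\<lambda>h. G \<bullet> h)) (at (x + s *\<^sub>R w))"
  shows "((\<lambda>s. \<rho> (x + s *\<^sub>R w)) has_real_derivative (G \<bullet> w)) (at s)"
proof -
  have "((\<lambda>s. x + s *\<^sub>R w) has_vector_derivative w) (at s)"
    by (auto intro!: derivative_eq_intros)
  then show ?thesis using chain_real[of "\<lambda>s. x + s *\<^sub>R w" w s \<rho> G] r by simp
qed

lemma dir_neg:
  fixes \<rho> :: "'a::real_inner \<Rightarrow> real"
  assumes r: "(\<rho> has_derivative (\<lambda>h. G \<bullet> h)) (at x)" and "G \<bullet> w < 0"
  shows "\<exists>d>0. \<forall>s. 0 < s \<and> s < d \<longrightarrow> \<rho> (x + s *\<^sub>R w) < \<rho> x"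
proof -
  have "((\<lambda>s. \<rho> (x + s *\<^sub>R w)) has_real_derivative (G \<bullet> w)) (at 0)"
    using line_deriv[of \<rho> G x 0 w] r by simp
  from DERIV_neg_dec_right[OF this assms(2)] show ?thesis by auto
qed

lemma C2_defining_at:
  "C2_defining \<Omega> y U \<rho> g \<Longrightarrow> x \<in> U \<Longrightarrow> C2_defining \<Omega> x U \<rho> g"
  unfolding C2_defining_def by blast

lemma rho_zero:
  assumes C: "C2_defining \<Omega> x U \<rho> g" and "open \<Omega>" and x: "x \<in> frontier \<Omega>"
  shows "\<rho> x = 0"
proof -
  have xU: "x \<in> U" and oU: "open U" using C unfolding C2_defining_def by auto
  have eq: "\<Omega> \<inter> U = {x\<in>U. \<rho> x < 0}" using C unfolding C2_defining_def by auto
  have der: "\<And>z. z \<in> U \<Longrightarrow> (\<rho> has_derivative (\<lambda>h. g z \<bullet> h)) (at z)"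
    using C unfolding C2_defining_def by auto
  have xn: "x \<notin> \<Omega>" using x \<open>open \<Omega>\<close> by (simp add: frontier_def interior_open)
  have xc: "x \<in> closure \<Omega>" using x by (simp add: frontier_def)
  have "\<not> \<rho> x < 0" using xn xU eq by auto
  moreover have "\<not> \<rho> x > 0"
  proof
    assume pos: "\<rho> x > 0"
    have cont: "continuous_on U \<rho>"
      using der by (meson has_derivative_continuous continuous_at_imp_continuous_on)
    have "open {z\<in>U. \<rho> z \<in> {0<..}}"
      using continuous_open_preimage[OF cont oU, of "{0<..}"] by (auto simp: vimage_def Int_def)
    moreover have "{z\<in>U. \<rho> z \<in> {0<..}} \<inter> \<Omega> = {}" using eq by (auto simp: set_eq_iff) (metis less_asym)
    ultimately have "{z\<in>U. \<rho> z \<in> {0<..}} \<inter> closure \<Omega> = {}"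
      using open_Int_closure_eq_empty by blast
    then show False using xc xU pos by auto
  qed
  ultimately show ?thesis by auto
qed

lemma unit_inner_lt1:
  fixes n1 n2 :: "'a::real_inner"
  assumes "norm n1 = 1" "norm n2 = 1" "n1 \<noteq> n2"
  shows "n1 \<bullet> n2 < 1"
proof -
  have "0 < norm (n1 - n2)^2" using assms(3) by simp
  also have "norm (n1 - n2)^2 = 2 - 2 * (n1 \<bullet> n2)"
    using assms(1,2) power2_norm_eq_inner[of n1] power2_norm_eq_inner[of n2]
    by (simp add: power2_norm_eq_inner inner_diff inner_commute)
  finally show ?thesis by simp
qed

lemma normal_unique:
  assumes C1: "C2_defining \<Omega> x U1 \<rho>1 g1" and C2: "C2_defining \<Omega> x U2 \<rho>2 g2"
    and "open \<Omega>" and x: "x \<in> frontier \<Omega>"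
  shows "(1 / norm (g1 x)) *\<^sub>R g1 x = (1 / norm (g2 x)) *\<^sub>R g2 x"
proof (rule ccontr)
  define n1 where "n1 = (1 / norm (g1 x)) *\<^sub>R g1 x"
  define n2 where "n2 = (1 / norm (g2 x)) *\<^sub>R g2 x"
  assume ne: "\<not> ?thesis"
  hence ne': "n1 \<noteq> n2" by (simp add: n1_def n2_def)
  have xU1: "x \<in> U1" and oU1: "open U1" and g1nz: "g1 x \<noteq> 0"
    and d1: "(\<rho>1 has_derivative (\<lambda>h. g1 x \<bullet> h)) (at x)"
    and eq1: "\<Omega> \<inter> U1 = {x\<in>U1. \<rho>1 x < 0}"
    using C1 unfolding C2_defining_def by auto
  have xU2: "x \<in> U2" and oU2: "open U2" and g2nz: "g2 x \<noteq> 0"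
    and d2: "(\<rho>2 has_derivative (\<lambda>h. g2 x \<bullet> h)) (at x)"
    and eq2: "\<Omega> \<inter> U2 = {x\<in>U2. \<rho>2 x < 0}"
    using C2 unfolding C2_defining_def by auto
  have z1: "\<rho>1 x = 0" using rho_zero[OF C1 \<open>open \<Omega>\<close> x] .
  have z2: "\<rho>2 x = 0" using rho_zero[OF C2 \<open>open \<Omega>\<close> x] .
  have nn1: "norm n1 = 1" using g1nz by (simp add: n1_def)
  have nn2: "norm n2 = 1" using g2nz by (simp add: n2_def)
  have lt: "n1 \<bullet> n2 < 1" using unit_inner_lt1[OF nn1 nn2 ne'] .
  define w where "w = n2 - n1"
  have g1n: "g1 x = norm (g1 x) *\<^sub>R n1" using g1nz by (simp add: n1_def)
  have g2n: "g2 x = norm (g2 x) *\<^sub>R n2" using g2nz by (simp add: n2_def)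
  have n11: "n1 \<bullet> n1 = 1" using nn1 power2_norm_eq_inner[of n1] by simp
  have n22: "n2 \<bullet> n2 = 1" using nn2 power2_norm_eq_inner[of n2] by simp
  have "g1 x \<bullet> w = norm (g1 x) * (n1 \<bullet> n2 - 1)"
    by (subst g1n) (simp add: w_def inner_diff_right n11 algebra_simps)
  hence w1: "g1 x \<bullet> w < 0" using lt g1nz by (simp add: mult_pos_neg)
  have "g2 x \<bullet> w = norm (g2 x) * (1 - n1 \<bullet> n2)"
    by (subst g2n) (simp add: w_def inner_diff_right n22 inner_commute algebra_simps)
  hence w2: "(- g2 x) \<bullet> w < 0" using lt g2nz by simp
  have d2': "((\<lambda>z. - \<rho>2 z) has_derivative (\<lambda>h. (- g2 x) \<bullet> h)) (at x)"
    using has_derivative_minus[OF d2] by simp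
  obtain e1 where e1: "e1 > 0" "\<forall>s. 0 < s \<and> s < e1 \<longrightarrow> \<rho>1 (x + s *\<^sub>R w) < \<rho>1 x"
    using dir_neg[OF d1 w1] by blast
  obtain e2 where e2: "e2 > 0" "\<forall>s. 0 < s \<and> s < e2 \<longrightarrow> - \<rho>2 (x + s *\<^sub>R w) < - \<rho>2 x"
    using dir_neg[OF d2' w2] by blast
  obtain e3 where e3: "e3 > 0" "ball x e3 \<subseteq> U1 \<inter> U2"
    using open_Int[OF oU1 oU2] xU1 xU2 by (meson IntI openE)
  obtain s where s0: "s > 0" and "s < e1" "s < e2" and "s * norm w < e3"
    using small_pos[OF e1(1) e2(1) norm_ge_zero e3(1)] by blast
  hence inB: "x + s *\<^sub>R w \<in> U1 \<inter> U2" using e3 s0 by (auto simp: dist_norm)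
  have "\<rho>1 (x + s *\<^sub>R w) < 0" using e1 \<open>s < e1\<close> s0 z1 by auto
  hence "x + s *\<^sub>R w \<in> \<Omega>" using eq1 inB by blast
  moreover have "\<rho>2 (x + s *\<^sub>R w) > 0" using e2 \<open>s < e2\<close> s0 z2 by force
  ultimately show False using eq2 inB by (auto simp: set_eq_iff) (metis less_asym)
qed

lemma outer_normal_eq:
  assumes C: "C2_defining \<Omega> x U \<rho> g" and "open \<Omega>" and x: "x \<in> frontier \<Omega>"
  shows "outer_normal \<Omega> x = (1 / norm (g x)) *\<^sub>R g x"
proof -
  have ex: "\<exists>v. \<exists>U \<rho> g. C2_defining \<Omega> x U \<rho> g \<and> v = (1 / norm (g x)) *\<^sub>R g x"
    using C by blast
  from someI_ex[OF ex] obtain U' \<rho>' g' where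
    C': "C2_defining \<Omega> x U' \<rho>' g'" and
    e: "outer_normal \<Omega> x = (1 / norm (g' x)) *\<^sub>R g' x"
    unfolding outer_normal_def by blast
  show ?thesis using e normal_unique[OF C' C \<open>open \<Omega>\<close> x] by simp
qed

lemma zero_frontier:
  assumes C: "C2_defining \<Omega> y U \<rho> g" and z: "z \<in> U" and r: "\<rho> z = 0"
  shows "z \<in> frontier \<Omega>"
proof -
  have oU: "open U" and gnz: "g z \<noteq> 0"
    and d: "(\<rho> has_derivative (\<lambda>h. g z \<bullet> h)) (at z)"
    and eq: "\<Omega> \<inter> U = {x\<in>U. \<rho> x < 0}"
    using C z unfolding C2_defining_def by auto
  have zn: "z \<notin> \<Omega>"
  proof
    assume "z \<in> \<Omega>" hence "z \<in> {x\<in>U. \<rho> x < 0}" using eq z by blast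
    thus False using r by simp
  qed
  have "g z \<bullet> (- g z) < 0" using gnz by simp
  from dir_neg[OF d this] obtain d1 where d1: "d1 > 0"
    "\<forall>s. 0 < s \<and> s < d1 \<longrightarrow> \<rho> (z + s *\<^sub>R (- g z)) < \<rho> z" by blast
  obtain e3 where e3: "e3 > 0" "ball z e3 \<subseteq> U" using oU z openE by blast
  have "z \<in> closure \<Omega>"
    unfolding closure_approachable
  proof (intro allI impI)
    fix e :: real assume e: "e > 0"
    have me: "min e e3 > 0" using e e3 by simp
    obtain s where s0: "s > 0" and "s < d1" and sm: "s * norm (g z) < min e e3"
      using small_pos[OF d1(1) d1(1) norm_ge_zero me] by blast
    have dd: "dist (z + s *\<^sub>R (- g z)) z = s * norm (g z)" using s0 by (simp add: dist_norm)
    have inU: "z + s *\<^sub>R (- g z) \<in> U" using e3 dd sm by (auto simp: dist_commute)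
    have "\<rho> (z + s *\<^sub>R (- g z)) < 0" using d1 s0 \<open>s < d1\<close> r by auto
    hence "z + s *\<^sub>R (- g z) \<in> \<Omega>" using eq inU by blast
    moreover have "dist (z + s *\<^sub>R (- g z)) z < e" using dd sm by linarith
    ultimately show "\<exists>y\<in>\<Omega>. dist y z < e" by blast
  qed
  moreover have "open \<Omega> \<Longrightarrow> True" by simp
  ultimately show ?thesis using zn by (simp add: frontier_def) (meson interior_subset subsetD)
qed



lemma seq_deriv:
  fixes f :: "'a::real_normed_vector \<Rightarrow> 'b::real_normed_vector"
  assumes d: "(f has_derivative F) (at y within S)"
    and xS: "\<And>k. x k \<in> S" and xne: "\<And>k. x k \<noteq> y"
    and s0: "s \<longlonglongrightarrow> 0" and spos: "\<And>k. s k > 0"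
    and v: "(\<lambda>k. (x k - y) /\<^sub>R s k) \<longlonglongrightarrow> v"
  shows "(\<lambda>k. (f (x k) - f y) /\<^sub>R s k) \<longlonglongrightarrow> F v"
proof -
  have bl: "bounded_linear F" and R: "((\<lambda>z. (1 / norm (z - y)) *\<^sub>R (f z - (f y + F (z - y)))) \<longlongrightarrow> 0) (at y within S)"
    using d unfolding has_derivative_within by auto
  have xe: "\<And>k. x k = y + s k *\<^sub>R ((x k - y) /\<^sub>R s k)" using spos by (simp add: less_imp_neq[symmetric])
  have "(\<lambda>k. y + s k *\<^sub>R ((x k - y) /\<^sub>R s k)) \<longlonglongrightarrow> y + 0 *\<^sub>R v"
    by (intro tendsto_intros s0 v)
  hence xy: "x \<longlonglongrightarrow> y" using xe by simp
  have fl: "filterlim x (at y within S) sequentially"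
    using xy xS xne by (auto simp: filterlim_at)
  have Rk: "(\<lambda>k. (1 / norm (x k - y)) *\<^sub>R (f (x k) - (f y + F (x k - y)))) \<longlonglongrightarrow> 0"
    using filterlim_compose[OF R fl] by simp
  have eq: "(f (x k) - f y) /\<^sub>R s k = F ((x k - y) /\<^sub>R s k) + norm ((x k - y) /\<^sub>R s k) *\<^sub>R ((1 / norm (x k - y)) *\<^sub>R (f (x k) - (f y + F (x k - y))))" for k
  proof -
    define u where "u = x k - y"
    define r where "r = s k"
    define Z where "Z = f (x k) - (f y + F u)"
    have n: "norm u \<noteq> 0" using xne[of k] by (simp add: u_def)
    have r0: "r > 0" using spos[of k] by (simp add: r_def)
    have "norm (u /\<^sub>R r) * (1 / norm u) = 1 / r" using n r0 by (simp add: divide_inverse)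
    hence 1: "norm (u /\<^sub>R r) *\<^sub>R ((1 / norm u) *\<^sub>R Z) = (1 / r) *\<^sub>R Z" by (simp only: scaleR_scaleR)
    have 2: "F (u /\<^sub>R r) = (1 / r) *\<^sub>R F u"
      using linear_cmul[OF bounded_linear.linear[OF bl]] by (simp add: divide_inverse)
    have "F (u /\<^sub>R r) + norm (u /\<^sub>R r) *\<^sub>R ((1 / norm u) *\<^sub>R Z) = (1 / r) *\<^sub>R (F u + Z)"
      unfolding 1 2 by (simp add: scaleR_right_distrib)
    also have "F u + Z = f (x k) - f y" by (simp add: Z_def)
    finally show ?thesis by (simp add: u_def r_def Z_def divide_inverse)
  qed
  have "(\<lambda>k. F ((x k - y) /\<^sub>R s k) + norm ((x k - y) /\<^sub>R s k) *\<^sub>R ((1 / norm (x k - y)) *\<^sub>R (f (x k) - (f y + F (x k - y))))) \<longlonglongrightarrow> F v + norm v *\<^sub>R 0"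
    by (intro tendsto_intros bounded_linear.tendsto[OF bl] v Rk)
  thus ?thesis using eq by simp
qed



lemma normal_facts:
  assumes C: "C2_defining \<Omega> y U \<rho> g" and "open \<Omega>" and y: "y \<in> frontier \<Omega>"
  shows "outer_normal \<Omega> y = (1 / norm (g y)) *\<^sub>R g y" "norm (outer_normal \<Omega> y) = 1"
    "g y \<bullet> outer_normal \<Omega> y = norm (g y)" "g y = norm (g y) *\<^sub>R outer_normal \<Omega> y"
proof -
  have gnz: "g y \<noteq> 0" using C unfolding C2_defining_def by auto
  show e: "outer_normal \<Omega> y = (1 / norm (g y)) *\<^sub>R g y" using outer_normal_eq[OF C assms(2) y] .
  show "norm (outer_normal \<Omega> y) = 1" using gnz by (simp add: e)
  show "g y \<bullet> outer_normal \<Omega> y = norm (g y)" using gnz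
    by (simp add: e power2_norm_eq_inner[symmetric] power2_eq_square)
  show "g y = norm (g y) *\<^sub>R outer_normal \<Omega> y" using gnz by (simp add: e)
qed

lemma tangent_points:
  assumes C: "C2_defining \<Omega> y U \<rho> g" and "open \<Omega>" and y: "y \<in> frontier \<Omega>"
    and v: "g y \<bullet> v = 0" and e: "e > 0"
  shows "\<exists>\<delta>>0. \<forall>s. 0 < s \<and> s < \<delta> \<longrightarrow>
     (\<exists>a. \<bar>a\<bar> \<le> e * s \<and> y + s *\<^sub>R v + a *\<^sub>R outer_normal \<Omega> y \<in> frontier \<Omega> \<inter> U)"
proof -
  define N where "N = outer_normal \<Omega> y"
  note nf = normal_facts[OF C assms(2) y, folded N_def]
  have gnz: "g y \<noteq> 0" and oU: "open U" and yU: "y \<in> U"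
    and der: "\<And>x. x \<in> U \<Longrightarrow> (\<rho> has_derivative (\<lambda>h. g x \<bullet> h)) (at x)"
    using C unfolding C2_defining_def by auto
  have r0: "\<rho> y = 0" using rho_zero[OF C assms(2) y] .
  define c where "c = norm v + e"
  have c0: "c > 0" using e by (simp add: c_def add_nonneg_pos)
  define ep where "ep = e * norm (g y) / (2 * c)"
  have ep0: "ep > 0" using e gnz c0 by (simp add: ep_def)
  have epc: "ep * c = e * norm (g y) / 2" using c0 by (simp add: ep_def)
  obtain d where d0: "d > 0" and dd: "\<And>z. norm (z - y) < d \<Longrightarrow>
      norm (\<rho> z - \<rho> y - g y \<bullet> (z - y)) \<le> ep * norm (z - y)"
    using der[OF yU] ep0 unfolding has_derivative_at_alt by blast
  obtain r where r0': "r > 0" and rU: "ball y r \<subseteq> U" using oU yU openE by blast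
  define \<delta> where "\<delta> = min d r / c"
  have \<delta>0: "\<delta> > 0" using d0 r0' c0 by (simp add: \<delta>_def)
  show ?thesis
  proof (rule exI[of _ \<delta>], intro conjI allI impI \<delta>0)
    fix s :: real assume s: "0 < s \<and> s < \<delta>"
    have sc: "s * c < min d r" using s c0 by (simp add: \<delta>_def pos_less_divide_eq)
    define F where "F a = \<rho> (y + s *\<^sub>R v + a *\<^sub>R N)" for a
    have hn: "norm (s *\<^sub>R v + a *\<^sub>R N) \<le> s * c" if "\<bar>a\<bar> \<le> e * s" for a
    proof -
      have "norm (s *\<^sub>R v + a *\<^sub>R N) \<le> norm (s *\<^sub>R v) + norm (a *\<^sub>R N)" by (rule norm_triangle_ineq)
      also have "\<dots> = s * norm v + \<bar>a\<bar>" using s nf(2) by simp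
      also have "\<dots> \<le> s * c" using that by (simp add: c_def algebra_simps)
      finally show ?thesis .
    qed
    have inU: "y + s *\<^sub>R v + a *\<^sub>R N \<in> U" if "\<bar>a\<bar> \<le> e * s" for a
    proof -
      have "dist y (y + s *\<^sub>R v + a *\<^sub>R N) = norm (s *\<^sub>R v + a *\<^sub>R N)"
        by (simp add: dist_norm add.assoc norm_minus_commute add.commute)
      hence "dist y (y + s *\<^sub>R v + a *\<^sub>R N) < r" using hn[OF that] sc by linarith
      thus ?thesis using rU by auto
    qed
    have est: "\<bar>F a - g y \<bullet> (s *\<^sub>R v + a *\<^sub>R N)\<bar> \<le> ep * (s * c)" if "\<bar>a\<bar> \<le> e * s" for a
    proof -
      have "norm ((y + s *\<^sub>R v + a *\<^sub>R N) - y) < d" using hn[OF that] sc by (simp add: add.assoc)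
      from dd[OF this] have "\<bar>F a - g y \<bullet> (s *\<^sub>R v + a *\<^sub>R N)\<bar> \<le> ep * norm (s *\<^sub>R v + a *\<^sub>R N)"
        by (simp add: F_def r0 add.assoc)
      also have "\<dots> \<le> ep * (s * c)" using hn[OF that] ep0 by simp
      finally show ?thesis .
    qed
    have gi: "g y \<bullet> (s *\<^sub>R v + a *\<^sub>R N) = a * norm (g y)" for a
      using v nf(3) by (simp add: inner_add_right)
    have es0: "e * s \<ge> 0" using e s by simp
    have Fp: "F (e * s) \<ge> 0"
    proof -
      have "\<bar>e * s\<bar> \<le> e * s" using es0 by simp
      from est[OF this] gi[of "e * s"] have "F (e * s) \<ge> e * s * norm (g y) - ep * (s * c)" by linarith
      moreover have "ep * (s * c) = s * (e * norm (g y) / 2)" using epc by (simp add: algebra_simps)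
      moreover have "e * s * norm (g y) = 2 * (s * (e * norm (g y) / 2))" by simp
      moreover have "s * (e * norm (g y) / 2) \<ge> 0" using e s by simp
      ultimately show ?thesis by linarith
    qed
    have Fn: "F (- (e * s)) \<le> 0"
    proof -
      have "\<bar>- (e * s)\<bar> \<le> e * s" using es0 by simp
      from est[OF this] gi[of "- (e * s)"] have "F (- (e * s)) \<le> - (e * s * norm (g y)) + ep * (s * c)" by (simp only: mult_minus_left)
      moreover have "ep * (s * c) = s * (e * norm (g y) / 2)" using epc by (simp add: algebra_simps)
      moreover have "e * s * norm (g y) = 2 * (s * (e * norm (g y) / 2))" by simp
      moreover have "s * (e * norm (g y) / 2) \<ge> 0" using e s by simp
      ultimately show ?thesis by linarith
    qed
    have cont: "continuous_on {- (e * s)..e * s} F"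
    proof (rule continuous_at_imp_continuous_on, intro ballI)
      fix a assume "a \<in> {- (e * s)..e * s}"
      hence "\<bar>a\<bar> \<le> e * s" by auto
      from inU[OF this] der have "(\<rho> has_derivative (\<lambda>h. g (y + s *\<^sub>R v + a *\<^sub>R N) \<bullet> h)) (at ((y + s *\<^sub>R v) + a *\<^sub>R N))" by simp
      from line_deriv[OF this] have "DERIV F a :> g (y + s *\<^sub>R v + a *\<^sub>R N) \<bullet> N"
        by (simp add: F_def[abs_def])
      thus "isCont F a" by (rule DERIV_isCont)
    qed
    obtain a where a: "- (e * s) \<le> a" "a \<le> e * s" "F a = 0"
      using IVT'[of F "- (e * s)" 0 "e * s", OF Fn Fp _ cont] es0 by auto
    have "\<bar>a\<bar> \<le> e * s" using a by auto
    moreover have "y + s *\<^sub>R v + a *\<^sub>R N \<in> frontier \<Omega>"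
      using zero_frontier[OF C inU[OF \<open>\<bar>a\<bar> \<le> e * s\<close>]] a(3) by (simp add: F_def)
    ultimately show "\<exists>a. \<bar>a\<bar> \<le> e * s \<and> y + s *\<^sub>R v + a *\<^sub>R outer_normal \<Omega> y \<in> frontier \<Omega> \<inter> U"
      using inU unfolding N_def by blast
  qed
qed



lemma ball_in_Omega:
  assumes C: "C2_defining \<Omega> y U \<rho> g" and oO: "open \<Omega>" and y: "y \<in> frontier \<Omega>"
    and t: "t > 0" and dt: "dist_bd \<Omega> (y - t *\<^sub>R outer_normal \<Omega> y) = t"
  shows "ball (y - t *\<^sub>R outer_normal \<Omega> y) t \<subseteq> \<Omega>"
proof -
  define N where "N = outer_normal \<Omega> y"
  note nf = normal_facts[OF C oO y, folded N_def]
  have yU: "y \<in> U" and oU: "open U" and gnz: "g y \<noteq> 0"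
    and der: "(\<rho> has_derivative (\<lambda>h. g y \<bullet> h)) (at y)"
    and eq: "\<Omega> \<inter> U = {x\<in>U. \<rho> x < 0}"
    using C unfolding C2_defining_def by auto
  have r0: "\<rho> y = 0" using rho_zero[OF C oO y] .
  define c where "c = y - t *\<^sub>R N"
  have disj: "ball c t \<inter> frontier \<Omega> = {}"
  proof (rule ccontr)
    assume "ball c t \<inter> frontier \<Omega> \<noteq> {}"
    then obtain z where z: "z \<in> frontier \<Omega>" "dist c z < t" by auto
    have "infdist c (frontier \<Omega>) \<le> dist c z" by (rule infdist_le[OF z(1)])
    thus False using z dt by (simp add: dist_bd_def c_def N_def)
  qed
  have "g y \<bullet> (- N) < 0" using nf(3) gnz by simp
  from dir_neg[OF der this] obtain d1 where d1: "d1 > 0" "\<forall>s. 0 < s \<and> s < d1 \<longrightarrow> \<rho> (y + s *\<^sub>R (- N)) < \<rho> y"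
    by blast
  obtain r where r: "r > 0" "ball y r \<subseteq> U" using oU yU openE by blast
  have t2: "2 * t > 0" using t by simp
  obtain s where s: "s > 0" "s < d1" "s < 2 * t" "s * 1 < r" using small_pos[OF d1(1) t2 zero_le_one r(1)] by auto
  have "dist y (y + s *\<^sub>R (- N)) = s" using s nf(2) by (simp add: dist_norm)
  hence inU: "y + s *\<^sub>R (- N) \<in> U" using r s by auto
  have "\<rho> (y + s *\<^sub>R (- N)) < 0" using d1 s r0 by auto
  hence inO: "y + s *\<^sub>R (- N) \<in> \<Omega>" using inU eq by blast
  have "dist c (y + s *\<^sub>R (- N)) = \<bar>t - s\<bar>"
  proof -
    have "c - (y + s *\<^sub>R (- N)) = (s - t) *\<^sub>R N" by (simp add: c_def algebra_simps)
    thus ?thesis using nf(2) by (simp add: dist_norm abs_minus_commute)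
  qed
  hence inB: "y + s *\<^sub>R (- N) \<in> ball c t" using s t by auto
  have "ball c t - \<Omega> = {}"
  proof (rule ccontr)
    assume "ball c t - \<Omega> \<noteq> {}"
    moreover have "ball c t \<inter> \<Omega> \<noteq> {}" using inB inO by blast
    ultimately have "ball c t \<inter> frontier \<Omega> \<noteq> {}"
      using connected_Int_frontier[OF connected_ball] by blast
    thus False using disj by simp
  qed
  thus ?thesis by (auto simp: c_def N_def)
qed



lemma shape_identity:
  assumes C: "C2_defining \<Omega> y U \<rho> g" and oO: "open \<Omega>" and y: "y \<in> frontier \<Omega>"
    and Dy: "(g has_derivative Hf) (at y)"
    and L: "(outer_normal \<Omega> has_derivative L) (at y within frontier \<Omega>)"
    and v: "g y \<bullet> v = 0" and vnz: "v \<noteq> 0"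
  shows "v \<bullet> L v = (v \<bullet> Hf v) / norm (g y)"
proof -
  define N where "N = outer_normal \<Omega> y"
  note nf = normal_facts[OF C oO y, folded N_def]
  have gnzU: "\<And>x. x \<in> U \<Longrightarrow> g x \<noteq> 0" using C unfolding C2_defining_def by auto
  have vN: "v \<bullet> N = 0" using v nf(1) by (simp add: inner_commute)
  have "\<forall>k. \<exists>p. fst p > 0 \<and> fst p < inverse (real (Suc k)) \<and> \<bar>snd p\<bar> \<le> inverse (real (Suc k)) * fst p
      \<and> y + fst p *\<^sub>R v + snd p *\<^sub>R N \<in> frontier \<Omega> \<inter> U"
  proof
    fix k
    have "inverse (real (Suc k)) > 0" by simp
    from tangent_points[OF C oO y v this] obtain \<delta> where \<delta>: "\<delta> > 0"
      "\<forall>s. 0 < s \<and> s < \<delta> \<longrightarrow> (\<exists>a. \<bar>a\<bar> \<le> inverse (real (Suc k)) * s \<and> y + s *\<^sub>R v + a *\<^sub>R N \<in> frontier \<Omega> \<inter> U)"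
      unfolding N_def by blast
    define s where "s = min \<delta> (inverse (real (Suc k))) / 2"
    have ik: "inverse (real (Suc k)) > 0" by simp
    have "min \<delta> (inverse (real (Suc k))) \<le> \<delta>" "min \<delta> (inverse (real (Suc k))) \<le> inverse (real (Suc k))"
      "min \<delta> (inverse (real (Suc k))) > 0" using \<delta>(1) ik by auto
    hence "s > 0" "s < \<delta>" "s < inverse (real (Suc k))" unfolding s_def by linarith+
    with \<delta>(2) obtain a where "\<bar>a\<bar> \<le> inverse (real (Suc k)) * s" "y + s *\<^sub>R v + a *\<^sub>R N \<in> frontier \<Omega> \<inter> U"
      by blast
    thus "\<exists>p. fst p > 0 \<and> fst p < inverse (real (Suc k)) \<and> \<bar>snd p\<bar> \<le> inverse (real (Suc k)) * fst p
      \<and> y + fst p *\<^sub>R v + snd p *\<^sub>R N \<in> frontier \<Omega> \<inter> U"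
      using \<open>s > 0\<close> \<open>s < inverse (real (Suc k))\<close> by (intro exI[of _ "(s, a)"]) auto
  qed
  then obtain P where P: "\<And>k. fst (P k) > 0 \<and> fst (P k) < inverse (real (Suc k)) \<and> \<bar>snd (P k)\<bar> \<le> inverse (real (Suc k)) * fst (P k)
      \<and> y + fst (P k) *\<^sub>R v + snd (P k) *\<^sub>R N \<in> frontier \<Omega> \<inter> U"
    by metis
  define s where "s k = fst (P k)" for k
  define a where "a k = snd (P k)" for k
  define x where "x k = y + s k *\<^sub>R v + a k *\<^sub>R N" for k
  have spos: "\<And>k. s k > 0" and sle: "\<And>k. s k < inverse (real (Suc k))"
    and ale: "\<And>k. \<bar>a k\<bar> \<le> inverse (real (Suc k)) * s k"
    and xF: "\<And>k. x k \<in> frontier \<Omega>" and xU: "\<And>k. x k \<in> U"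
    using P by (auto simp: s_def a_def x_def)
  have s0: "s \<longlonglongrightarrow> 0"
  proof (rule real_tendsto_sandwich[of "\<lambda>_. 0" _ _ "\<lambda>k. inverse (real (Suc k))"])
    show "\<forall>\<^sub>F k in sequentially. 0 \<le> s k" by (intro always_eventually allI less_imp_le spos)
    show "\<forall>\<^sub>F k in sequentially. s k \<le> inverse (real (Suc k))" by (intro always_eventually allI less_imp_le sle)
  qed (rule tendsto_const, rule LIMSEQ_inverse_real_of_nat)
  have ratio: "\<bar>a k / s k\<bar> \<le> inverse (real (Suc k))" for k
  proof -
    have "\<bar>a k / s k\<bar> = \<bar>a k\<bar> / s k" using spos[of k] by (simp add: abs_divide)
    also have "\<dots> \<le> inverse (real (Suc k))" using ale[of k] spos[of k] by (simp add: pos_divide_le_eq)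
    finally show ?thesis .
  qed
  have r0: "(\<lambda>k. a k / s k) \<longlonglongrightarrow> 0"
  proof (rule real_tendsto_sandwich[of "\<lambda>k. - inverse (real (Suc k))" _ _ "\<lambda>k. inverse (real (Suc k))"])
    show "\<forall>\<^sub>F k in sequentially. - inverse (real (Suc k)) \<le> a k / s k"
    proof (intro always_eventually allI)
      fix k show "- inverse (real (Suc k)) \<le> a k / s k" using abs_le_D2[OF ratio[of k]] by linarith
    qed
    show "\<forall>\<^sub>F k in sequentially. a k / s k \<le> inverse (real (Suc k))"
    proof (intro always_eventually allI)
      fix k show "a k / s k \<le> inverse (real (Suc k))" using abs_le_D1[OF ratio[of k]] by linarith
    qed
    show "(\<lambda>k. - inverse (real (Suc k))) \<longlonglongrightarrow> 0"
      using tendsto_minus[OF LIMSEQ_inverse_real_of_nat] by simp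
  qed (rule LIMSEQ_inverse_real_of_nat)
  have xd: "(x k - y) /\<^sub>R s k = v + (a k / s k) *\<^sub>R N" for k
  proof -
    have sk: "s k \<noteq> 0" using spos[of k] by simp
    show ?thesis by (simp add: x_def scaleR_add_right divide_inverse_commute sk)
  qed
  have xv: "(\<lambda>k. (x k - y) /\<^sub>R s k) \<longlonglongrightarrow> v"
    unfolding xd using tendsto_add[OF tendsto_const tendsto_scaleR[OF r0 tendsto_const]] by simp
  have xne: "\<And>k. x k \<noteq> y"
  proof
    fix k assume "x k = y"
    hence "v \<bullet> (x k - y) = 0" by simp
    moreover have "v \<bullet> (x k - y) = s k * (v \<bullet> v)" using vN by (simp add: x_def inner_add_right)
    ultimately show False using spos[of k] vnz by simp
  qed
  have Q1: "(\<lambda>k. (outer_normal \<Omega> (x k) - outer_normal \<Omega> y) /\<^sub>R s k) \<longlonglongrightarrow> L v"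
    by (rule seq_deriv[OF L xF xne s0 spos xv])
  have Q2: "(\<lambda>k. (g (x k) - g y) /\<^sub>R s k) \<longlonglongrightarrow> Hf v"
    by (rule seq_deriv[of g Hf y UNIV, OF _ _ xne s0 spos xv]) (use Dy in auto)
  have xy: "x \<longlonglongrightarrow> y"
  proof -
    have "(\<lambda>k. y + s k *\<^sub>R ((x k - y) /\<^sub>R s k)) \<longlonglongrightarrow> y + 0 *\<^sub>R v"
      by (intro tendsto_intros s0 xv)
    moreover have "\<And>k. y + s k *\<^sub>R ((x k - y) /\<^sub>R s k) = x k" using spos by (simp add: less_imp_neq[symmetric])
    ultimately show ?thesis by simp
  qed
  have gc: "isCont g y" using Dy by (rule has_derivative_continuous)
  have ng: "(\<lambda>k. norm (g (x k))) \<longlonglongrightarrow> norm (g y)"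
    by (intro tendsto_norm isCont_tendsto_compose[OF gc xy])
  have eqk: "v \<bullet> ((outer_normal \<Omega> (x k) - outer_normal \<Omega> y) /\<^sub>R s k) = (v \<bullet> ((g (x k) - g y) /\<^sub>R s k)) / norm (g (x k))" for k
  proof -
    have e1: "outer_normal \<Omega> (x k) = (1 / norm (g (x k))) *\<^sub>R g (x k)"
      using outer_normal_eq[OF C2_defining_at[OF C xU] oO xF] .
    have "v \<bullet> outer_normal \<Omega> y = 0" using vN by (simp add: N_def)
    thus ?thesis using v by (simp add: e1 inner_diff_right divide_inverse inner_commute)
  qed
  have "(\<lambda>k. v \<bullet> ((outer_normal \<Omega> (x k) - outer_normal \<Omega> y) /\<^sub>R s k)) \<longlonglongrightarrow> v \<bullet> L v"
    by (intro tendsto_intros Q1)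
  moreover have "(\<lambda>k. (v \<bullet> ((g (x k) - g y) /\<^sub>R s k)) / norm (g (x k))) \<longlonglongrightarrow> (v \<bullet> Hf v) / norm (g y)"
    using nf by (intro tendsto_intros Q2 ng) (use gnzU[OF C2_defining_def[THEN iffD1, OF C, THEN conjunct2, THEN conjunct1]] in auto)
  ultimately show ?thesis unfolding eqk by (rule LIMSEQ_unique)
qed



lemma z_deriv:
  fixes y v N :: "'a::real_normed_vector"
  shows "((\<lambda>s. y + s *\<^sub>R v - (\<beta> * s^2) *\<^sub>R N) has_vector_derivative (v - (2 * \<beta> * x) *\<^sub>R N)) (at x)"
  by (auto intro!: derivative_eq_intros simp: algebra_simps)

lemma Kderiv:
  fixes y v N :: "'a::real_inner"
  assumes Dy: "(g has_derivative Hf) (at y)"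
  shows "((\<lambda>s. g (y + s *\<^sub>R v - (\<beta> * s^2) *\<^sub>R N) \<bullet> (v - (2 * \<beta> * s) *\<^sub>R N)) has_real_derivative
      (Hf v \<bullet> v - 2 * \<beta> * (g y \<bullet> N))) (at 0)"
proof -
  define z where "z s = y + s *\<^sub>R v - (\<beta> * s^2) *\<^sub>R N" for s :: real
  have z0: "z 0 = y" by (simp add: z_def)
  have zd: "(z has_derivative (\<lambda>h. h *\<^sub>R v)) (at 0)"
    using z_deriv[of y v \<beta> N 0] unfolding has_vector_derivative_def z_def by simp
  have gz: "((g \<circ> z) has_derivative (Hf \<circ> (\<lambda>h. h *\<^sub>R v))) (at 0)"
    by (rule diff_chain_at[OF zd]) (simp add: z0 Dy)
  have wd: "((\<lambda>s. v - (2 * \<beta> * s) *\<^sub>R N) has_derivative (\<lambda>h. h *\<^sub>R (- (2 * \<beta>) *\<^sub>R N))) (at 0)"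
    by (auto intro!: derivative_eq_intros simp: algebra_simps)
  have lin: "linear Hf" using Dy by (rule has_derivative_linear)
  have "((\<lambda>s. (g \<circ> z) s \<bullet> (v - (2 * \<beta> * s) *\<^sub>R N)) has_derivative
     (\<lambda>h. (g \<circ> z) 0 \<bullet> (h *\<^sub>R (- (2 * \<beta>) *\<^sub>R N)) + (Hf \<circ> (\<lambda>h. h *\<^sub>R v)) h \<bullet> (v - (2 * \<beta> * 0) *\<^sub>R N))) (at 0)"
    by (rule has_derivative_inner[OF gz wd])
  moreover have "(\<lambda>h. (g \<circ> z) 0 \<bullet> (h *\<^sub>R (- (2 * \<beta>) *\<^sub>R N)) + (Hf \<circ> (\<lambda>h. h *\<^sub>R v)) h \<bullet> (v - (2 * \<beta> * 0) *\<^sub>R N))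
      = (*) (Hf v \<bullet> v - 2 * \<beta> * (g y \<bullet> N))"
    using linear_cmul[OF lin] by (auto simp: fun_eq_iff z0 algebra_simps)
  ultimately show ?thesis unfolding has_field_derivative_def z_def by (simp add: comp_def)
qed

lemma norm_orth_sq:
  fixes v N :: "'a::real_inner"
  assumes "v \<bullet> N = 0" "norm N = 1"
  shows "norm (s *\<^sub>R v + a *\<^sub>R N) ^ 2 = s^2 * (v \<bullet> v) + a^2"
proof -
  have NN: "N \<bullet> N = 1" using assms(2) power2_norm_eq_inner[of N] by simp
  have vN: "N \<bullet> v = 0" using assms(1) by (simp add: inner_commute)
  show ?thesis unfolding power2_norm_eq_inner
    by (simp add: inner_add_left inner_add_right assms(1) vN NN power2_eq_square algebra_simps)
qed

lemma second_order:
  assumes C: "C2_defining \<Omega> y U \<rho> g" and oO: "open \<Omega>" and y: "y \<in> frontier \<Omega>"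
    and Dy: "(g has_derivative Hf) (at y)"
    and t: "t > 0" and dt: "dist_bd \<Omega> (y - t *\<^sub>R outer_normal \<Omega> y) = t"
    and v: "g y \<bullet> v = 0" and vnz: "v \<noteq> 0"
  shows "v \<bullet> Hf v \<le> norm (g y) * (v \<bullet> v) / t"
proof (rule ccontr)
  define N where "N = outer_normal \<Omega> y"
  note nf = normal_facts[OF C oO y, folded N_def]
  have yU: "y \<in> U" and oU: "open U" and gnz: "g y \<noteq> 0"
    and der: "\<And>x. x \<in> U \<Longrightarrow> (\<rho> has_derivative (\<lambda>h. g x \<bullet> h)) (at x)"
    and eq: "\<Omega> \<inter> U = {x\<in>U. \<rho> x < 0}"
    using C unfolding C2_defining_def by auto
  have r0: "\<rho> y = 0" using rho_zero[OF C oO y] .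
  have vN: "v \<bullet> N = 0" using v nf(1) by (simp add: inner_commute)
  define G where "G = norm (g y)"
  define V where "V = v \<bullet> v"
  define q where "q = v \<bullet> Hf v"
  have G0: "G > 0" using gnz by (simp add: G_def)
  have V0: "V > 0" using vnz by (simp add: V_def)
  assume "\<not> v \<bullet> Hf v \<le> norm (g y) * (v \<bullet> v) / t"
  hence qb: "q > G * V / t" by (simp add: q_def G_def V_def)
  define \<beta> where "\<beta> = (V / (2 * t) + q / (2 * G)) / 2"
  have "q * t > G * V" using qb t by (simp add: pos_divide_less_eq mult.commute)
  hence "q / (2 * G) > V / (2 * t)" using G0 t by (simp add: field_simps)
  hence b1: "\<beta> > V / (2 * t)" and b2: "\<beta> < q / (2 * G)" by (simp_all add: \<beta>_def)
  have bpos: "\<beta> > 0" using b1 V0 t by (smt (verit) divide_pos_pos)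
  have e0: "2 * t * \<beta> - V > 0" using b1 t by (simp add: field_simps)
  have kpos: "q - 2 * \<beta> * G > 0" using b2 G0 by (simp add: field_simps)
  define z where "z s = y + s *\<^sub>R v - (\<beta> * s^2) *\<^sub>R N" for s :: real
  define K where "K s = g (z s) \<bullet> (v - (2 * \<beta> * s) *\<^sub>R N)" for s :: real
  have dK: "DERIV K 0 :> (Hf v \<bullet> v - 2 * \<beta> * (g y \<bullet> N))"
  proof -
    have "K = (\<lambda>s. g (y + s *\<^sub>R v - (\<beta> * s^2) *\<^sub>R N) \<bullet> (v - (2 * \<beta> * s) *\<^sub>R N))"
      by (simp add: fun_eq_iff K_def z_def)
    thus ?thesis using Kderiv[OF Dy, of v \<beta> N] by simp
  qed
  have "Hf v \<bullet> v - 2 * \<beta> * (g y \<bullet> N) = q - 2 * \<beta> * G"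
    using nf(3) by (simp add: q_def G_def inner_commute[of "Hf v" v])
  with dK have dK': "DERIV K 0 :> q - 2 * \<beta> * G" by simp
  from DERIV_pos_inc_right[OF dK' kpos] obtain d2 where d2a: "d2 > 0"
    and d2b: "\<forall>h>0. h < d2 \<longrightarrow> K 0 < K (0 + h)" by blast
  have d2: "d2 > 0" "\<And>h. h > 0 \<Longrightarrow> h < d2 \<Longrightarrow> K 0 < K (0 + h)" using d2a d2b by auto
  have K0: "K 0 = 0" by (simp add: K_def z_def v)
  obtain r where r: "r > 0" "ball y r \<subseteq> U" using oU yU openE by blast
  have m1: "min 1 d2 > 0" using d2 by simp
  have m2: "min r (2 * t * \<beta> - V) > 0" using r e0 by simp
  have cc: "norm v + \<beta> + \<beta>^2 \<ge> 0" using bpos by simp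
  obtain s where s: "s > 0" "s < min 1 d2" "s * (norm v + \<beta> + \<beta>^2) < min r (2 * t * \<beta> - V)"
    using small_pos[OF m1 m1 cc m2] by blast
  have s1: "s < 1" and sd: "s < d2" using s by auto
  have zU: "z x \<in> U" if "0 \<le> x" "x \<le> s" for x
  proof -
    have "dist y (z x) = norm (x *\<^sub>R v - (\<beta> * x^2) *\<^sub>R N)"
      by (simp add: z_def dist_norm norm_minus_commute)
    also have "\<dots> \<le> norm (x *\<^sub>R v) + norm ((\<beta> * x^2) *\<^sub>R N)" by (rule norm_triangle_ineq4)
    also have "\<dots> = x * norm v + \<beta> * x^2" using that bpos nf(2) by simp
    also have "\<dots> \<le> s * norm v + \<beta> * s"
    proof -
      have "x * x \<le> x * 1" using that s1 by (intro mult_left_mono) auto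
      hence "x^2 \<le> x" by (simp add: power2_eq_square)
      hence "x^2 \<le> s" using that by linarith
      thus ?thesis using that bpos by (intro add_mono mult_right_mono mult_left_mono) auto
    qed
    also have "\<dots> \<le> s * (norm v + \<beta> + \<beta>^2)" using s(1) by (simp add: algebra_simps)
    also have "\<dots> < r" using s(3) by simp
    finally show ?thesis using r by auto
  qed
  have dk: "DERIV (\<lambda>s. \<rho> (z s)) x :> K x" if "0 \<le> x" "x \<le> s" for x
    unfolding K_def
  proof -
    have "(z has_vector_derivative (v - (2 * \<beta> * x) *\<^sub>R N)) (at x)"
      unfolding z_def[abs_def] by (rule z_deriv)
    thus "DERIV (\<lambda>s. \<rho> (z s)) x :> g (z x) \<bullet> (v - (2 * \<beta> * x) *\<^sub>R N)"
      using chain_real[of z "v - (2 * \<beta> * x) *\<^sub>R N" x \<rho> "g (z x)"] der[OF zU[OF that]] by blast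
  qed
  obtain \<xi> where xi: "0 < \<xi>" "\<xi> < s" "\<rho> (z s) - \<rho> (z 0) = (s - 0) * K \<xi>"
    using MVT2[OF s(1) dk] by blast
  have "K \<xi> > 0" using d2(2)[of \<xi>] xi sd K0 by simp
  moreover have "z 0 = y" by (simp add: z_def)
  ultimately have pos: "\<rho> (z s) > 0" using xi s(1) r0 by simp
  have "z s \<in> ball (y - t *\<^sub>R N) t"
  proof -
    have "z s - (y - t *\<^sub>R N) = s *\<^sub>R v + (t - \<beta> * s^2) *\<^sub>R N"
      by (simp add: z_def algebra_simps)
    hence "norm (z s - (y - t *\<^sub>R N)) ^ 2 = s^2 * V + (t - \<beta> * s^2)^2"
      using norm_orth_sq[OF vN nf(2)] by (simp add: V_def)
    also have "\<dots> < t^2"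
    proof -
      have "s * \<beta>^2 < 2 * t * \<beta> - V"
        using s(3) s(1) bpos by (smt (verit) mult_nonneg_nonneg norm_ge_zero distrib_left zero_le_power2)
      hence "s^2 * \<beta>^2 < 2 * t * \<beta> - V" using s1 s(1)
        by (smt (verit) mult_right_mono power2_eq_square zero_le_power2 mult_le_cancel_right1)
      hence X: "V - 2 * t * \<beta> + \<beta>^2 * s^2 < 0" by (simp add: mult.commute)
      have "s^2 > 0" using s(1) by simp
      hence "s^2 * (V - 2 * t * \<beta> + \<beta>^2 * s^2) < 0" using X by (rule mult_pos_neg)
      thus ?thesis by (simp add: power2_eq_square algebra_simps)
    qed
    finally have "norm (z s - (y - t *\<^sub>R N)) < t" using t by (simp add: power_less_imp_less_base)
    thus ?thesis by (simp add: dist_norm norm_minus_commute)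
  qed
  hence "z s \<in> \<Omega>" using ball_in_Omega[OF C oO y t dt] by (auto simp: N_def)
  hence "\<rho> (z s) < 0" using zU[of s] s(1) eq by auto
  thus False using pos by simp
qed



lemma tangent_proj_linear:
  "linear (tangent_proj \<Omega> y)"
  unfolding tangent_proj_def[abs_def]
  by (rule linearI) (simp_all add: inner_add_left algebra_simps scaleR_add_left)

lemma curv_bound:
  fixes \<Omega> :: "(real^'n) set"
  assumes C: "C2_defining \<Omega> y U \<rho> g" and oO: "open \<Omega>" and y: "y \<in> frontier \<Omega>"
    and pc: "principal_curvatures \<Omega> y \<kappa>"
    and t: "t > 0" and dt: "dist_bd \<Omega> (y - t *\<^sub>R outer_normal \<Omega> y) = t"
    and j: "j < CARD('n) - 1"
  shows "t * \<kappa> j \<le> 1"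
proof (cases "\<kappa> j \<le> 0")
  case True thus ?thesis using t by (smt (verit) mult_nonneg_nonpos less_imp_le)
next
  case False
  define k where "k = \<kappa> j"
  have k0: "k > 0" using False by (simp add: k_def)
  define N where "N = outer_normal \<Omega> y"
  note nf = normal_facts[OF C oO y, folded N_def]
  obtain D where D: "\<forall>x\<in>U. (g has_derivative blinfun_apply (D x)) (at x)"
    using C unfolding C2_defining_def by blast
  have yU: "y \<in> U" and gnz: "g y \<noteq> 0" using C unfolding C2_defining_def by auto
  have Dy: "(g has_derivative blinfun_apply (D y)) (at y)" using D yU by blast
  obtain L where L: "(outer_normal \<Omega> has_derivative L) (at y within frontier \<Omega>)"
    and chp: "\<And>s::real. det (s *\<^sub>R mat 1 - matrix (L \<circ> tangent_proj \<Omega> y))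
                     = s * (\<Prod>j<CARD('n) - 1. (s - \<kappa> j))"
    using pc unfolding principal_curvatures_def by blast
  define M where "M = matrix (L \<circ> tangent_proj \<Omega> y)"
  define A where "A = k *\<^sub>R mat 1 - M"
  have "(\<Prod>j<CARD('n) - 1. (k - \<kappa> j)) = 0"
    using j by (subst prod_zero_iff) (auto simp: k_def)
  hence dA: "det A = 0" using chp[of k] by (simp add: A_def M_def)
  have "\<exists>w. A *v w = 0 \<and> w \<noteq> 0"
  proof (rule ccontr)
    assume "\<not> ?thesis"
    hence "\<forall>x. A *v x = 0 \<longrightarrow> x = 0" by blast
    hence "\<exists>B. B ** A = mat 1" using matrix_left_invertible_ker by blast
    hence "invertible A" using invertible_left_inverse by blast
    thus False using dA invertible_det_nz by blast
  qed
  then obtain w where w: "A *v w = 0" "w \<noteq> 0" by blast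
  have linL: "linear L" using L by (rule has_derivative_linear)
  have linLP: "linear (L \<circ> tangent_proj \<Omega> y)"
    by (rule linear_compose[OF tangent_proj_linear linL])
  have "A *v w = k *\<^sub>R w - L (tangent_proj \<Omega> y w)"
    unfolding A_def M_def matrix_vector_mult_diff_rdistrib matrix_works[OF linLP[folded linear_matrix_vector_mul_eq]]
    by (simp add: scaleR_matrix_vector_assoc[symmetric])
  hence Lw: "L (tangent_proj \<Omega> y w) = k *\<^sub>R w" using w(1) by simp
  define v where "v = tangent_proj \<Omega> y w"
  have vdef: "v = w - (w \<bullet> N) *\<^sub>R N" by (simp add: v_def tangent_proj_def N_def)
  have NN: "N \<bullet> N = 1" using nf(2) power2_norm_eq_inner[of N] by simp
  have Nv: "N \<bullet> v = 0" by (simp add: vdef inner_diff_right NN inner_commute)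
  have gv: "g y \<bullet> v = 0" by (subst nf(4)) (simp add: Nv)
  have vnz: "v \<noteq> 0"
  proof
    assume "v = 0"
    hence "L v = 0" using linear_0[OF linL] by simp
    hence "k *\<^sub>R w = 0" using Lw by (simp add: v_def)
    thus False using k0 w(2) by simp
  qed
  have vw: "v \<bullet> w = v \<bullet> v"
    by (simp add: vdef inner_diff_left inner_diff_right NN inner_commute power2_eq_square algebra_simps)
  define G where "G = norm (g y)"
  define V where "V = v \<bullet> v"
  define Q where "Q = v \<bullet> blinfun_apply (D y) v"
  have G0: "G > 0" using gnz by (simp add: G_def)
  have V0: "V > 0" using vnz by (simp add: V_def)
  have e1: "k * V = Q / G"
  proof -
    have "v \<bullet> L v = k * (v \<bullet> v)" using Lw vw by (simp add: v_def[symmetric])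
    moreover have "v \<bullet> L v = (v \<bullet> blinfun_apply (D y) v) / norm (g y)"
      using shape_identity[OF C oO y Dy L gv vnz] .
    ultimately show ?thesis by (simp add: V_def Q_def G_def)
  qed
  have e2: "Q \<le> G * V / t"
    using second_order[OF C oO y Dy t dt gv vnz] by (simp add: V_def Q_def G_def)
  have "Q / G \<le> (G * V / t) / G" using e2 G0 by (rule divide_right_mono[OF _ less_imp_le])
  also have "(G * V / t) / G = (1 / t) * V" using G0 by simp
  finally have "k * V \<le> (1 / t) * V" using e1 by simp
  hence "k \<le> 1 / t" using V0 by (rule mult_right_le_imp_le)
  hence "t * k \<le> t * (1 / t)" using t by (intro mult_left_mono) auto
  thus ?thesis using t by (simp add: k_def)
qed

lemma amgm_prod:
  fixes x :: "nat \<Rightarrow> real"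
  assumes m: "m \<ge> 1" and x: "\<And>i. i < m \<Longrightarrow> x i \<ge> 0"
  shows "(\<Prod>i<m. x i) \<le> ((\<Sum>i<m. x i) / m) ^ m"
proof -
  define P where "P = (\<Prod>i<m. x i)"
  have P0: "P \<ge> 0" unfolding P_def by (rule prod_nonneg) (use x in auto)
  have S0: "(\<Sum>i<m. x i) / m \<ge> 0" by (intro divide_nonneg_nonneg sum_nonneg) (use x in auto)
  show ?thesis
  proof (cases "P = 0")
    case True thus ?thesis using S0 by (simp add: P_def[symmetric])
  next
    case False
    hence Pp: "P > 0" using P0 by simp
    have "(\<Sum>i\<in>{..<m}. x i / card {..<m}) \<ge> (\<Prod>i\<in>{..<m}. x i) powr (1 / card {..<m})"
      by (rule arith_geom_mean) (use m x in \<open>auto simp: lessThan_empty_iff\<close>)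
    hence am: "P powr (1 / m) \<le> (\<Sum>i<m. x i) / m"
      by (simp add: P_def sum_divide_distrib)
    have "P = (P powr (1 / m)) powr (real m)" using m Pp by (simp add: powr_powr)
    also have "\<dots> = (P powr (1 / m)) ^ m" using Pp by (simp add: powr_realpow)
    also have "\<dots> \<le> ((\<Sum>i<m. x i) / m) ^ m" by (rule power_mono[OF am]) simp
    finally show ?thesis by (simp add: P_def)
  qed
qed

lemma integral_pow:
  fixes H l :: real
  assumes H: "H > 0" and l: "l \<ge> 0"
  shows "integral {0..l} (\<lambda>t. (1 - t * H) ^ m) = (1 - (1 - l * H) ^ Suc m) / (real (Suc m) * H)"
proof -
  define F where "F t = - ((1 - t * H) ^ Suc m) / (real (Suc m) * H)" for t
  have "((\<lambda>t. (1 - t * H) ^ m) has_integral F l - F 0) {0..l}"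
  proof (rule fundamental_theorem_of_calculus[OF l])
    fix x assume "x \<in> {0..l}"
    have d1: "((\<lambda>t. (1 - t * H) ^ Suc m) has_real_derivative (real (Suc m) * (1 - x * H) ^ m * (- H))) (at x)"
      by (rule derivative_eq_intros refl | simp)+
    have d2: "(F has_real_derivative (- (real (Suc m) * (1 - x * H) ^ m * (- H)) / (real (Suc m) * H))) (at x)"
      unfolding F_def[abs_def] by (intro DERIV_cdivide DERIV_minus d1)
    have "- (real (Suc m) * (1 - x * H) ^ m * (- H)) / (real (Suc m) * H) = (1 - x * H) ^ m"
      using H by (simp add: field_simps del: of_nat_Suc)
    hence "(F has_real_derivative (1 - x * H) ^ m) (at x)" using d2 by simp
    thus "(F has_vector_derivative (1 - x * H) ^ m) (at x within {0..l})"
      by (simp add: has_real_derivative_iff_has_vector_derivative has_vector_derivative_at_within)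
  qed
  moreover have "F l - F 0 = (1 - (1 - l * H) ^ Suc m) / (real (Suc m) * H)"
  proof -
    have gen: "\<And>A B d::real. - A / d - - B / d = (B - A) / d" by (simp add: diff_divide_distrib)
    show ?thesis unfolding F_def gen by simp
  qed
  ultimately show ?thesis by (simp add: integral_unique)
qed


theorem mainTheorem2:
  fixes \<Omega> :: "(real^'n) set" and y :: "real^'n" and \<kappa> :: "nat \<Rightarrow> real"
  assumes "CARD('n) \<ge> 2"
    and "bounded \<Omega>" and "connected \<Omega>" and "open \<Omega>" and "C2_boundary \<Omega>"
    and "y \<in> frontier \<Omega>"
    and "principal_curvatures \<Omega> y \<kappa>"
  shows "phi_fun \<Omega> y \<kappa> * mean_curv \<Omega> \<kappa> \<le> 1 / real CARD('n)"
proof -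
  note oO = assms(4) and yF = assms(6) and pc = assms(7)
  define m where "m = CARD('n) - 1"
  have m1: "m \<ge> 1" and mS: "Suc m = CARD('n)" using assms(1) by (auto simp: m_def)
  obtain U \<rho> g where C: "C2_defining \<Omega> y U \<rho> g"
    using assms(5) yF unfolding C2_boundary_def by blast
  define N where "N = outer_normal \<Omega> y"
  note nf = normal_facts[OF C oO yF, folded N_def]
  define S where "S = {t. t \<ge> 0 \<and> dist_bd \<Omega> (y - t *\<^sub>R N) = t}"
  define lam where "lam = cut_value \<Omega> y"
  have lamS: "lam = Sup S" by (simp add: lam_def cut_value_def S_def N_def)
  have S0: "0 \<in> S" using yF by (simp add: S_def dist_bd_def)
  have down: "s \<in> S" if "t \<in> S" "0 \<le> s" "s \<le> t" for s t
  proof -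
    have dt: "infdist (y - t *\<^sub>R N) (frontier \<Omega>) = t" using that(1) by (simp add: S_def dist_bd_def)
    have a: "infdist (y - s *\<^sub>R N) (frontier \<Omega>) \<le> s"
    proof -
      have "infdist (y - s *\<^sub>R N) (frontier \<Omega>) \<le> dist (y - s *\<^sub>R N) y" by (rule infdist_le[OF yF])
      also have "\<dots> = s" using nf(2) that(2) by (simp add: dist_norm)
      finally show ?thesis .
    qed
    have "infdist (y - t *\<^sub>R N) (frontier \<Omega>) \<le> infdist (y - s *\<^sub>R N) (frontier \<Omega>) + dist (y - t *\<^sub>R N) (y - s *\<^sub>R N)"
      by (rule infdist_triangle)
    moreover have "dist (y - t *\<^sub>R N) (y - s *\<^sub>R N) = t - s"
    proof -
      have "(y - t *\<^sub>R N) - (y - s *\<^sub>R N) = (s - t) *\<^sub>R N" by (simp add: algebra_simps)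
      thus ?thesis using nf(2) that by (simp add: dist_norm)
    qed
    ultimately have "infdist (y - s *\<^sub>R N) (frontier \<Omega>) \<ge> s" using dt by linarith
    thus ?thesis using a that(2) by (simp add: S_def dist_bd_def)
  qed
  have cb: "t * \<kappa> j \<le> 1" if "t \<in> S" "t > 0" "j < m" for t j
    using curv_bound[OF C oO yF pc that(2), of j] that by (simp add: S_def N_def m_def)
  have app: "\<exists>s\<in>S. t' < s" if tl: "t' < lam" for t'
  proof (cases "bdd_above S")
    case True
    thus ?thesis using tl S0 less_cSup_iff[of S t'] by (auto simp: lamS)
  next
    case False
    thus ?thesis unfolding bdd_above_def by (meson not_le)
  qed
  have K: "t * \<kappa> j \<le> 1" if tK: "0 \<le> t" "t \<le> lam" "j < m" for t j
  proof (rule ccontr)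
    assume "\<not> t * \<kappa> j \<le> 1"
    hence g1: "t * \<kappa> j > 1" by simp
    have t0: "t > 0" using g1 tK(1) by (cases "t = 0") auto
    have kp: "\<kappa> j > 0" using g1 t0 by (smt (verit) mult_nonneg_nonpos less_imp_le)
    have ik: "1 / \<kappa> j < t" using g1 kp by (simp add: divide_less_eq mult.commute)
    define t' where "t' = (t + 1 / \<kappa> j) / 2"
    have t'1: "t' > 1 / \<kappa> j" "t' < t" using ik by (simp_all add: t'_def)
    have t'0: "t' > 0" using t'1 kp by (smt (verit) divide_pos_pos)
    obtain s where s: "s \<in> S" "t' < s" using app[of t'] t'1 tK(2) by force
    have "t' \<in> S" using down[OF s(1)] t'0 s(2) by simp
    hence "t' * \<kappa> j \<le> 1" using cb t'0 tK(3) by blast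
    moreover have "t' * \<kappa> j > 1" using t'1 kp by (simp add: divide_less_eq)
    ultimately show False by simp
  qed
  define f where "f t = (\<Prod>j<m. (1 - t * \<kappa> j))" for t
  have fnn: "f t \<ge> 0" if "0 \<le> t" "t \<le> lam" for t
    unfolding f_def by (rule prod_nonneg) (use K[OF that] in auto)
  have phi: "phi_fun \<Omega> y \<kappa> = integral {0..lam} f"
    by (simp add: phi_fun_def lam_def f_def[abs_def] m_def)
  define Hm where "Hm = (\<Sum>j<m. \<kappa> j) / real m"
  have Hm: "mean_curv \<Omega> \<kappa> = Hm" by (simp add: mean_curv_def Hm_def m_def)
  have fcont: "continuous_on {0..lam} f" unfolding f_def[abs_def] by (intro continuous_intros)
  have fint: "f integrable_on {0..lam}" by (rule integrable_continuous_interval[OF fcont])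
  have pos: "0 \<le> 1 / real CARD('n)" by simp
  show ?thesis
  proof (cases "Hm \<le> 0")
    case True
    have "integral {0..lam} f \<ge> 0" by (rule integral_nonneg[OF fint]) (use fnn in auto)
    hence "phi_fun \<Omega> y \<kappa> * mean_curv \<Omega> \<kappa> \<le> 0" using True by (simp add: phi Hm mult_nonneg_nonpos)
    thus ?thesis using pos by linarith
  next
    case False
    hence Hp: "Hm > 0" by simp
    show ?thesis
    proof (cases "lam < 0")
      case True
      hence "{0..lam} = {}" by simp
      hence "phi_fun \<Omega> y \<kappa> = 0" by (simp add: phi)
      thus ?thesis using pos by simp
    next
      case False
      hence l0: "lam \<ge> 0" by simp
      have am: "f t \<le> (1 - t * Hm) ^ m" if "t \<in> {0..lam}" for t
      proof -
        have "f t \<le> ((\<Sum>i<m. (1 - t * \<kappa> i)) / m) ^ m"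
          unfolding f_def by (rule amgm_prod[OF m1]) (use K that in auto)
        moreover have "(\<Sum>i<m. (1 - t * \<kappa> i)) / m = 1 - t * Hm"
          using m1 by (simp add: sum_subtractf sum_distrib_left[symmetric] Hm_def field_simps)
        ultimately show ?thesis by simp
      qed
      have gcont: "continuous_on {0..lam} (\<lambda>t. (1 - t * Hm) ^ m)" by (intro continuous_intros)
      have "integral {0..lam} f \<le> integral {0..lam} (\<lambda>t. (1 - t * Hm) ^ m)"
        by (rule integral_le[OF fint integrable_continuous_interval[OF gcont]]) (use am in auto)
      also have "\<dots> = (1 - (1 - lam * Hm) ^ Suc m) / (real (Suc m) * Hm)"
        by (rule integral_pow[OF Hp l0])
      finally have I: "phi_fun \<Omega> y \<kappa> \<le> (1 - (1 - lam * Hm) ^ Suc m) / (real (Suc m) * Hm)"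
        by (simp add: phi)
      have "lam * (\<Sum>j<m. \<kappa> j) \<le> real m"
      proof -
        have "lam * (\<Sum>j<m. \<kappa> j) = (\<Sum>j<m. lam * \<kappa> j)" by (simp add: sum_distrib_left)
        also have "\<dots> \<le> (\<Sum>j<m. 1)" by (rule sum_mono) (use K[OF l0 order_refl] in auto)
        finally show ?thesis by simp
      qed
      hence "lam * Hm \<le> 1" using m1 by (simp add: Hm_def divide_le_eq mult.commute)
      hence "(1 - lam * Hm) ^ Suc m \<ge> 0" by simp
      have "phi_fun \<Omega> y \<kappa> * Hm \<le> (1 - (1 - lam * Hm) ^ Suc m) / (real (Suc m) * Hm) * Hm"
        using mult_right_mono[OF I less_imp_le[OF Hp]] .
      also have "\<dots> = (1 - (1 - lam * Hm) ^ Suc m) / real (Suc m)" using Hp by simp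
      also have "\<dots> \<le> 1 / real (Suc m)"
        using \<open>(1 - lam * Hm) ^ Suc m \<ge> 0\<close> by (intro divide_right_mono) auto
      finally show ?thesis using mS by (simp add: Hm)
    qed
  qed
qed


end
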